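(* Let $\varepsilon>0$ and let $H\ge\max_p r_p$ be an integer. Then the assignment $\big(\tfrac12\alpha_p\big)_{p\in\Pi}$, $\big(\tfrac12\beta_{t,\tau}\big)_{t\in T,1\le\tau\le H}$, $\big(\tfrac12\beta_{r,\tau}\big)_{r\in R,1\le\tau\le H}$ is a feasible solution of the dual program $\mathcal D_{\varepsilon,H}$, and consequently $\mathcal D_\varepsilon\le 2\,\mathrm{val}(\mathcal P_{\varepsilon,H})$.
   Context: Network. $S,T,R,D$ are pairwise disjoint finite sets (sources, transmitters, receivers, destinations). Each transmitter $t\in T$ is attached to a source $s(t)\in S$ via a link of integer delay $d(s(t),t)\ge 0$; each receiver $r\in R$ is attached to a destination $d(r)\in D$ via a link of integer delay $d(r,d(r))\ge 0$. A set $E_R\subseteq T\times R$ of reconfigurable edges is given, each $e\in E_R$ with integer delay $d(e)\ge 1$. A set $E_\ell\subseteq S\times D$ of fixed links is given, each with integer delay $\ge0$. For $e=(t,r)\in E_R$ put $\Delta(e)=d(s(t),t)+d(e)+d(r,d(r))$. Two edges of $E_R$ are adjacent if they share a transmitter or a receiver (an edge is adjacent to itself). Packets. $\Pi$ is a finite set of unit-size packets; packet $p$ has weight $w_p>0$, release time $r_p\in\mathbb Z_{\ge1}$, source $s_p$, destination $d_p$. Let $E(p)=\{(t,r)\in E_R: s(t)=s_p,\ d(r)=d_p\}$; assume $E(p)\neq\emptyset$ for all $p$. $\Pi_\ell$ is the set of packets with $(s_p,d_p)\in E_\ell$, and $\ell_p:=d(s_p,d_p)$ for them. Fix a total order $\prec$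 on $\Pi$ with $r_p<r_q\Rightarrow p\prec q$. Algorithm ALG. Packets are processed in the order $\prec$; $p$ is processed at time $r_p$, before transmission step $r_p$. A packet assigned to a reconfigurable edge $e$ is split into $d(e)$ chunks of weight $w_p/d(e)$ assigned to $e$; $p(c)$, $w_c$, $e(c)$ denote the packet, weight and edge of chunk $c$. A chunk is pending until transmitted; $W(C)$ is the total weight of a set $C$ of chunks. When $p$ is processed, $B(p)$ is the set of pending chunks of packets $p'\prec p$; for $e=(t,r)\in E(p)$, $\mathrm{Adj}(p,e)$ = chunks of $B(p)$ whose edge is adjacent to $e$, $H(p,e)=\{c\in\mathrm{Adj}(p,e):w_c\ge w_p/d(e)\}$, $L(p,e)=\mathrm{Adj}(p,e)\setminus H(p,e)$, and $\mathrm{imp}(p,e)=w_p(d(s_p,t)+\frac{d(e)+1}{2}+d(r,d_p))+w_p|H(p,e)|+d(e)W(L(p,e))$. With $e^*\in\arg\min_{e\in E(p)}\mathrm{imp}(p,e)$: if $p\in\Pi_\ell$ and $w_p\ell_p\le\mathrm{imp}(p,e^* )$, $p$ is sent over its fixed link; otherwise $p$ is assigned to $e(p):=e^*$ and split into chunks. Scheduler: at each integer $\tau\ge1$, build $M_\tau$ greedily over pending chunks in order of decreasing weight (ties by $\prec$ on packets, then arbitrary), adding $c$ iff no chunk already in $M_\tau$ has an edge adjacent to $e(c)$; chunks of $M_\tau$ are transmitted at step $\tau$. If chunk $c$ of $p$ is transmitted at step $\tau_c$ via $e(p)=(t,r)$, its completion time is $f_c=\tau_c+1+d(s_p,t)+d(r,d_p)$,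 and $c$ is active at integer times $\tau$ with $r_p\le\tau<f_c$. Dual assignment: $\alpha_p=w_p\ell_p$ if $p$ is sent over its fixed link, and $\alpha_p=\mathrm{imp}(p,e(p))$ (computed when $p$ is processed) otherwise; $\beta_{t,\tau}$ ($t\in T$, integer $\tau\ge1$) is the total weight of chunks active at $\tau$ whose edge has transmitter $t$, and $\beta_{r,\tau}$ ($r\in R$) likewise with receiver $r$. For $\varepsilon>0$, $\mathcal D_\varepsilon=\sum_p\alpha_p-\frac{1}{2+\varepsilon}\big(\sum_{t}\sum_{\tau\ge1}\beta_{t,\tau}+\sum_r\sum_{\tau\ge1}\beta_{r,\tau}\big)$. Linear programs. For $\varepsilon>0$ and integer $H\ge\max_p r_p$, the primal $\mathcal P_{\varepsilon,H}$ has variables $x_{p,e,\tau}\ge0$ ($p\in\Pi$, $e\in E(p)$, $\tau\in\{r_p,\dots,H\}$) and $y_p\ge0$ ($p\in\Pi_\ell$): minimize $\sum_{p}\sum_{e\in E(p)}\sum_{\tau}w_px_{p,e,\tau}(\tau+\Delta(e)-r_p)+\sum_{p\in\Pi_\ell}w_p\ell_py_p$ subject to $\sum_{e,\tau}x_{p,e,\tau}+y_p\ge1$ ($p\in\Pi_\ell$); $\sum_{e,\tau}x_{p,e,\tau}\ge1$ ($p\notin\Pi_\ell$); for every $\tau\le H$, $t\in T$: $\sum_r\sum_{p:r_p\le\tau,(t,r)\in E(p)}d(t,r)x_{p,(t,r),\tau}\le\frac1{2+\varepsilon}$; for every $\tau\le H$, $r\in R$: $\sum_t\sum_{p:r_p\le\tau,(t,r)\in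 E(p)}d(t,r)x_{p,(t,r),\tau}\le\frac1{2+\varepsilon}$. $\mathrm{val}(\mathcal P_{\varepsilon,H})$ is its optimal value ($+\infty$ if infeasible). Its dual $\mathcal D_{\varepsilon,H}$ has variables $\alpha_p\ge0$ ($p\in\Pi$), $\beta_{t,\tau}\ge0$, $\beta_{r,\tau}\ge0$ ($t\in T$, $r\in R$, $1\le\tau\le H$): maximize $\sum_p\alpha_p-\frac1{2+\varepsilon}\big(\sum_t\sum_{\tau\le H}\beta_{t,\tau}+\sum_r\sum_{\tau\le H}\beta_{r,\tau}\big)$ subject to $\alpha_p-d(e)(\beta_{t,\tau}+\beta_{r,\tau})\le w_p(\tau+\Delta(e)-r_p)$ for all $p\in\Pi$, $e=(t,r)\in E(p)$, $r_p\le\tau\le H$, and $\alpha_p\le w_p\ell_p$ for all $p\in\Pi_\ell$. *)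

theory Defs
  imports "HOL-Analysis.Analysis"
begin

record ('v, 'p) inst =
  Src :: "'v set"
  Trn :: "'v set"
  Rcv :: "'v set"
  Dst :: "'v set"
  sof :: "'v \<Rightarrow> 'v"
  dof :: "'v \<Rightarrow> 'v"
  ER  :: "('v \<times> 'v) set"   (* reconfigurable edges, subset of T x R *)
  EL  :: "('v \<times> 'v) set"   (* fixed links, subset of S x D *)
  dl  :: "'v \<Rightarrow> 'v \<Rightarrow> nat"  (* delay d(u,v) of every link (s(t),t), (t,r), (r,d(r)), (s,d) *)
  Pk  :: "'p set"
  wt  :: "'p \<Rightarrow> real"
  rl  :: "'p \<Rightarrow> nat"
  sp  :: "'p \<Rightarrow> 'v"
  dp  :: "'p \<Rightarrow> 'v"
  prec :: "'p \<Rightarrow> 'p \<Rightarrow> bool"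

definition dE :: "('v,'p) inst \<Rightarrow> 'v \<times> 'v \<Rightarrow> nat" where
  "dE I e = dl I (fst e) (snd e)"

definition Delta :: "('v,'p) inst \<Rightarrow> 'v \<times> 'v \<Rightarrow> nat" where
  "Delta I e = dl I (sof I (fst e)) (fst e) + dl I (fst e) (snd e) + dl I (snd e) (dof I (snd e))"

definition Ep :: "('v,'p) inst \<Rightarrow> 'p \<Rightarrow> ('v \<times> 'v) set" where
  "Ep I p = {e \<in> ER I. sof I (fst e) = sp I p \<and> dof I (snd e) = dp I p}"

definition PiL :: "('v,'p) inst \<Rightarrow> 'p set" where
  "PiL I = {p \<in> Pk I. (sp I p, dp I p) \<in> EL I}"

definition ell :: "('v,'p) inst \<Rightarrow> 'p \<Rightarrow> nat" where
  "ell I p = dl I (sp I p) (dp I p)"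

definition adjacent :: "'v \<times> 'v \<Rightarrow> 'v \<times> 'v \<Rightarrow> bool" where
  "adjacent e e' \<longleftrightarrow> fst e = fst e' \<or> snd e = snd e'"

definition valid_inst :: "('v,'p) inst \<Rightarrow> bool" where
  "valid_inst I \<longleftrightarrow>
     finite (Src I) \<and> finite (Trn I) \<and> finite (Rcv I) \<and> finite (Dst I) \<and>
     Src I \<inter> Trn I = {} \<and> Src I \<inter> Rcv I = {} \<and> Src I \<inter> Dst I = {} \<and>
     Trn I \<inter> Rcv I = {} \<and> Trn I \<inter> Dst I = {} \<and> Rcv I \<inter> Dst I = {} \<and>
     (\<forall>t\<in>Trn I. sof I t \<in> Src I) \<and> (\<forall>r\<in>Rcv I. dof I r \<in> Dst I) \<and>
     ER I \<subseteq> Trn I \<times> Rcv I \<and> (\<forall>e\<in>ER I. dE I e \<ge> 1) \<and>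
     EL I \<subseteq> Src I \<times> Dst I \<and>
     finite (Pk I) \<and>
     (\<forall>p\<in>Pk I. wt I p > 0 \<and> rl I p \<ge> 1 \<and> sp I p \<in> Src I \<and> dp I p \<in> Dst I \<and> Ep I p \<noteq> {}) \<and>
     (\<forall>p\<in>Pk I. \<not> prec I p p) \<and>
     (\<forall>p\<in>Pk I. \<forall>q\<in>Pk I. \<forall>u\<in>Pk I. prec I p q \<longrightarrow> prec I q u \<longrightarrow> prec I p u) \<and>
     (\<forall>p\<in>Pk I. \<forall>q\<in>Pk I. p \<noteq> q \<longrightarrow> prec I p q \<or> prec I q p) \<and>
     (\<forall>p\<in>Pk I. \<forall>q\<in>Pk I. rl I p < rl I q \<longrightarrow> prec I p q)"

(* fixd p: p is sent over its fixed link; edg p: the minimiser e* computed for p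
   (equal to e(p) when p is not sent over its fixed link); chunks of p are (p,i), i < d(e(p));
   tx c: the transmission step of chunk c. *)
record ('v, 'p) run =
  fixd :: "'p \<Rightarrow> bool"
  edg  :: "'p \<Rightarrow> 'v \<times> 'v"
  tx   :: "'p \<times> nat \<Rightarrow> nat"

definition chunks :: "('v,'p) inst \<Rightarrow> ('v,'p) run \<Rightarrow> ('p \<times> nat) set" where
  "chunks I A = {c. fst c \<in> Pk I \<and> \<not> fixd A (fst c) \<and> snd c < dE I (edg A (fst c))}"

definition cw :: "('v,'p) inst \<Rightarrow> ('v,'p) run \<Rightarrow> 'p \<times> nat \<Rightarrow> real" where
  "cw I A c = wt I (fst c) / real (dE I (edg A (fst c)))"

definition cedge :: "('v,'p) run \<Rightarrow> 'p \<times> nat \<Rightarrow> 'v \<times> 'v" where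
  "cedge A c = edg A (fst c)"

(* B(p): chunks of packets p' \<prec> p still pending at time r_p (before step r_p) *)
definition Bset :: "('v,'p) inst \<Rightarrow> ('v,'p) run \<Rightarrow> 'p \<Rightarrow> ('p \<times> nat) set" where
  "Bset I A p = {c \<in> chunks I A. prec I (fst c) p \<and> tx A c \<ge> rl I p}"

definition AdjS :: "('v,'p) inst \<Rightarrow> ('v,'p) run \<Rightarrow> 'p \<Rightarrow> 'v \<times> 'v \<Rightarrow> ('p \<times> nat) set" where
  "AdjS I A p e = {c \<in> Bset I A p. adjacent (cedge A c) e}"

definition HS :: "('v,'p) inst \<Rightarrow> ('v,'p) run \<Rightarrow> 'p \<Rightarrow> 'v \<times> 'v \<Rightarrow> ('p \<times> nat) set" where
  "HS I A p e = {c \<in> AdjS I A p e. cw I A c \<ge> wt I p / real (dE I e)}"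

definition LS :: "('v,'p) inst \<Rightarrow> ('v,'p) run \<Rightarrow> 'p \<Rightarrow> 'v \<times> 'v \<Rightarrow> ('p \<times> nat) set" where
  "LS I A p e = AdjS I A p e - HS I A p e"

definition imp :: "('v,'p) inst \<Rightarrow> ('v,'p) run \<Rightarrow> 'p \<Rightarrow> 'v \<times> 'v \<Rightarrow> real" where
  "imp I A p e =
     wt I p * (real (dl I (sp I p) (fst e)) + (real (dE I e) + 1) / 2 + real (dl I (snd e) (dp I p)))
     + wt I p * real (card (HS I A p e))
     + real (dE I e) * (\<Sum>c\<in>LS I A p e. cw I A c)"

definition pending :: "('v,'p) inst \<Rightarrow> ('v,'p) run \<Rightarrow> nat \<Rightarrow> ('p \<times> nat) set" where
  "pending I A \<tau> = {c \<in> chunks I A. rl I (fst c) \<le> \<tau> \<and> \<tau> \<le> tx A c}"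

fun greedy_aux :: "('c \<Rightarrow> 'c \<Rightarrow> bool) \<Rightarrow> 'c set \<Rightarrow> 'c list \<Rightarrow> 'c set" where
  "greedy_aux adj M [] = M"
| "greedy_aux adj M (c # cs) =
     greedy_aux adj (if (\<forall>c'\<in>M. \<not> adj c' c) then insert c M else M) cs"

definition scan_before :: "('v,'p) inst \<Rightarrow> ('v,'p) run \<Rightarrow> 'p \<times> nat \<Rightarrow> 'p \<times> nat \<Rightarrow> bool" where
  "scan_before I A c c' \<longleftrightarrow>
     cw I A c > cw I A c' \<or>
     (cw I A c = cw I A c' \<and> (prec I (fst c) (fst c') \<or> fst c = fst c'))"

definition alg_run :: "('v,'p) inst \<Rightarrow> ('v,'p) run \<Rightarrow> bool" where
  "alg_run I A \<longleftrightarrow>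
     (\<forall>p\<in>Pk I.
        edg A p \<in> Ep I p \<and> (\<forall>e\<in>Ep I p. imp I A p (edg A p) \<le> imp I A p e) \<and>
        (fixd A p \<longleftrightarrow> p \<in> PiL I \<and> wt I p * real (ell I p) \<le> imp I A p (edg A p))) \<and>
     (\<forall>c\<in>chunks I A. rl I (fst c) \<le> tx A c) \<and>
     (\<forall>\<tau>\<ge>1. \<exists>L. distinct L \<and> set L = pending I A \<tau> \<and> sorted_wrt (scan_before I A) L \<and>
        {c \<in> pending I A \<tau>. tx A c = \<tau>} =
          greedy_aux (\<lambda>c' c. adjacent (cedge A c') (cedge A c)) {} L)"

definition fin_time :: "('v,'p) inst \<Rightarrow> ('v,'p) run \<Rightarrow> 'p \<times> nat \<Rightarrow> nat" where
  "fin_time I A c = tx A c + 1 + dl I (sp I (fst c)) (fst (cedge A c)) + dl I (snd (cedge A c)) (dp I (fst c))"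

definition active :: "('v,'p) inst \<Rightarrow> ('v,'p) run \<Rightarrow> 'p \<times> nat \<Rightarrow> nat \<Rightarrow> bool" where
  "active I A c \<tau> \<longleftrightarrow> rl I (fst c) \<le> \<tau> \<and> \<tau> < fin_time I A c"

definition alpha :: "('v,'p) inst \<Rightarrow> ('v,'p) run \<Rightarrow> 'p \<Rightarrow> real" where
  "alpha I A p = (if fixd A p then wt I p * real (ell I p) else imp I A p (edg A p))"

definition betaT :: "('v,'p) inst \<Rightarrow> ('v,'p) run \<Rightarrow> 'v \<Rightarrow> nat \<Rightarrow> real" where
  "betaT I A t \<tau> = (\<Sum>c\<in>{c \<in> chunks I A. active I A c \<tau> \<and> fst (cedge A c) = t}. cw I A c)"

definition betaR :: "('v,'p) inst \<Rightarrow> ('v,'p) run \<Rightarrow> 'v \<Rightarrow> nat \<Rightarrow> real" where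
  "betaR I A r \<tau> = (\<Sum>c\<in>{c \<in> chunks I A. active I A c \<tau> \<and> snd (cedge A c) = r}. cw I A c)"

definition Deps :: "('v,'p) inst \<Rightarrow> ('v,'p) run \<Rightarrow> real \<Rightarrow> real" where
  "Deps I A \<epsilon> = (\<Sum>p\<in>Pk I. alpha I A p)
     - 1 / (2 + \<epsilon>) * ((\<Sum>t\<in>Trn I. \<Sum>\<^sub>\<infinity>\<tau>\<in>{1..}. betaT I A t \<tau>) + (\<Sum>r\<in>Rcv I. \<Sum>\<^sub>\<infinity>\<tau>\<in>{1..}. betaR I A r \<tau>))"

definition primal_feasible :: "('v,'p) inst \<Rightarrow> real \<Rightarrow> nat \<Rightarrow>
    ('p \<Rightarrow> 'v \<times> 'v \<Rightarrow> nat \<Rightarrow> real) \<Rightarrow> ('p \<Rightarrow> real) \<Rightarrow> bool" where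
  "primal_feasible I \<epsilon> H x y \<longleftrightarrow>
     (\<forall>p\<in>Pk I. \<forall>e\<in>Ep I p. \<forall>\<tau>\<in>{rl I p..H}. x p e \<tau> \<ge> 0) \<and>
     (\<forall>p\<in>PiL I. y p \<ge> 0) \<and>
     (\<forall>p\<in>PiL I. (\<Sum>e\<in>Ep I p. \<Sum>\<tau>\<in>{rl I p..H}. x p e \<tau>) + y p \<ge> 1) \<and>
     (\<forall>p\<in>Pk I - PiL I. (\<Sum>e\<in>Ep I p. \<Sum>\<tau>\<in>{rl I p..H}. x p e \<tau>) \<ge> 1) \<and>
     (\<forall>\<tau>\<le>H. \<forall>t\<in>Trn I.
        (\<Sum>r\<in>Rcv I. \<Sum>p\<in>{p \<in> Pk I. rl I p \<le> \<tau> \<and> (t, r) \<in> Ep I p}. real (dl I t r) * x p (t, r) \<tau>)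
          \<le> 1 / (2 + \<epsilon>)) \<and>
     (\<forall>\<tau>\<le>H. \<forall>r\<in>Rcv I.
        (\<Sum>t\<in>Trn I. \<Sum>p\<in>{p \<in> Pk I. rl I p \<le> \<tau> \<and> (t, r) \<in> Ep I p}. real (dl I t r) * x p (t, r) \<tau>)
          \<le> 1 / (2 + \<epsilon>))"

definition primal_obj :: "('v,'p) inst \<Rightarrow> nat \<Rightarrow>
    ('p \<Rightarrow> 'v \<times> 'v \<Rightarrow> nat \<Rightarrow> real) \<Rightarrow> ('p \<Rightarrow> real) \<Rightarrow> real" where
  "primal_obj I H x y =
     (\<Sum>p\<in>Pk I. \<Sum>e\<in>Ep I p. \<Sum>\<tau>\<in>{rl I p..H}.
        wt I p * x p e \<tau> * (real \<tau> + real (Delta I e) - real (rl I p)))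
     + (\<Sum>p\<in>PiL I. wt I p * real (ell I p) * y p)"

(* optimal value; Inf of the empty set is +\<infinity> (infeasible) *)
definition primal_val :: "('v,'p) inst \<Rightarrow> real \<Rightarrow> nat \<Rightarrow> ereal" where
  "primal_val I \<epsilon> H = Inf {ereal (primal_obj I H x y) | x y. primal_feasible I \<epsilon> H x y}"

definition dual_feasible :: "('v,'p) inst \<Rightarrow> nat \<Rightarrow>
    ('p \<Rightarrow> real) \<Rightarrow> ('v \<Rightarrow> nat \<Rightarrow> real) \<Rightarrow> ('v \<Rightarrow> nat \<Rightarrow> real) \<Rightarrow> bool" where
  "dual_feasible I H a bt br \<longleftrightarrow>
     (\<forall>p\<in>Pk I. a p \<ge> 0) \<and>
     (\<forall>t\<in>Trn I. \<forall>\<tau>\<in>{1..H}. bt t \<tau> \<ge> 0) \<and>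
     (\<forall>r\<in>Rcv I. \<forall>\<tau>\<in>{1..H}. br r \<tau> \<ge> 0) \<and>
     (\<forall>p\<in>Pk I. \<forall>e\<in>Ep I p. \<forall>\<tau>\<in>{rl I p..H}.
        a p - real (dE I e) * (bt (fst e) \<tau> + br (snd e) \<tau>)
          \<le> wt I p * (real \<tau> + real (Delta I e) - real (rl I p))) \<and>
     (\<forall>p\<in>PiL I. a p \<le> wt I p * real (ell I p))"

end

theory Submission
  imports Defs "HOL-Analysis.Analysis"
begin

lemma exch:
  fixes F :: "'p \<Rightarrow> 'v \<Rightarrow> 'v \<Rightarrow> nat \<Rightarrow> real"
  assumes fP: "finite P" and fT: "finite TT" and fR: "finite RR"
    and sub: "\<And>p. p \<in> P \<Longrightarrow> E p \<subseteq> TT \<times> RR"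
    and r1: "\<And>p. p \<in> P \<Longrightarrow> rr p \<ge> (1::nat)"
  shows "(\<Sum>p\<in>P. \<Sum>e\<in>E p. \<Sum>\<tau>\<in>{rr p..H}. F p (fst e) (snd e) \<tau>)
       = (\<Sum>\<tau>\<in>{1..H}. \<Sum>t\<in>TT. \<Sum>r\<in>RR. \<Sum>p\<in>{p\<in>P. rr p \<le> \<tau> \<and> (t,r) \<in> E p}. F p t r \<tau>)"
proof -
  define G where "G p t r \<tau> = (if (t,r) \<in> E p \<and> rr p \<le> \<tau> then F p t r \<tau> else 0)" for p t r \<tau>
  have "(\<Sum>p\<in>P. \<Sum>e\<in>E p. \<Sum>\<tau>\<in>{rr p..H}. F p (fst e) (snd e) \<tau>)
      = (\<Sum>p\<in>P. \<Sum>e\<in>TT \<times> RR. \<Sum>\<tau>\<in>{1..H}. G p (fst e) (snd e) \<tau>)"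
  proof (rule sum.cong[OF refl])
    fix p assume p: "p \<in> P"
    have A: "(\<Sum>\<tau>\<in>{rr p..H}. F p (fst e) (snd e) \<tau>) = (\<Sum>\<tau>\<in>{1..H}. G p (fst e) (snd e) \<tau>)"
      if "e \<in> E p" for e
    proof -
      have "(\<Sum>\<tau>\<in>{1..H}. G p (fst e) (snd e) \<tau>) = (\<Sum>\<tau>\<in>{\<tau>\<in>{1..H}. rr p \<le> \<tau>}. F p (fst e) (snd e) \<tau>)"
        unfolding G_def using that by (simp only: sum.inter_filter[OF finite_atLeastAtMost]) simp
      also have "{\<tau>\<in>{1..H}. rr p \<le> \<tau>} = {rr p..H}" using r1[OF p] by auto
      finally show ?thesis by simp
    qed
    have "(\<Sum>e\<in>TT \<times> RR. \<Sum>\<tau>\<in>{1..H}. G p (fst e) (snd e) \<tau>) = (\<Sum>e\<in>E p. \<Sum>\<tau>\<in>{1..H}. G p (fst e) (snd e) \<tau>)"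
      by (rule sum.mono_neutral_right) (use fT fR sub[OF p] in \<open>auto simp: G_def\<close>)
    then show "(\<Sum>e\<in>E p. \<Sum>\<tau>\<in>{rr p..H}. F p (fst e) (snd e) \<tau>) = (\<Sum>e\<in>TT \<times> RR. \<Sum>\<tau>\<in>{1..H}. G p (fst e) (snd e) \<tau>)"
      using A by simp
  qed
  also have "\<dots> = (\<Sum>p\<in>P. \<Sum>t\<in>TT. \<Sum>r\<in>RR. \<Sum>\<tau>\<in>{1..H}. G p t r \<tau>)"
  proof (rule sum.cong[OF refl])
    fix p
    show "(\<Sum>e\<in>TT \<times> RR. \<Sum>\<tau>\<in>{1..H}. G p (fst e) (snd e) \<tau>) = (\<Sum>t\<in>TT. \<Sum>r\<in>RR. \<Sum>\<tau>\<in>{1..H}. G p t r \<tau>)"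
      by (subst sum.cartesian_product) (simp add: case_prod_beta)
  qed
  also have "\<dots> = (\<Sum>t\<in>TT. \<Sum>p\<in>P. \<Sum>r\<in>RR. \<Sum>\<tau>\<in>{1..H}. G p t r \<tau>)"
    by (rule sum.swap)
  also have "\<dots> = (\<Sum>t\<in>TT. \<Sum>r\<in>RR. \<Sum>p\<in>P. \<Sum>\<tau>\<in>{1..H}. G p t r \<tau>)"
    by (simp add: sum.swap[of _ P])
  also have "\<dots> = (\<Sum>t\<in>TT. \<Sum>r\<in>RR. \<Sum>\<tau>\<in>{1..H}. \<Sum>p\<in>P. G p t r \<tau>)"
    by (simp add: sum.swap[of _ P])
  also have "\<dots> = (\<Sum>t\<in>TT. \<Sum>\<tau>\<in>{1..H}. \<Sum>r\<in>RR. \<Sum>p\<in>P. G p t r \<tau>)"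
    by (simp add: sum.swap[of _ RR])
  also have "\<dots> = (\<Sum>\<tau>\<in>{1..H}. \<Sum>t\<in>TT. \<Sum>r\<in>RR. \<Sum>p\<in>P. G p t r \<tau>)"
    by (rule sum.swap)
  also have "\<dots> = (\<Sum>\<tau>\<in>{1..H}. \<Sum>t\<in>TT. \<Sum>r\<in>RR. \<Sum>p\<in>{p\<in>P. rr p \<le> \<tau> \<and> (t,r) \<in> E p}. F p t r \<tau>)"
    unfolding G_def using fP by (simp add: sum.inter_filter[symmetric] conj_commute)
  finally show ?thesis .
qed


lemma weak_duality:
  assumes V: "valid_inst I" and eps: "\<epsilon> > 0"
    and D: "dual_feasible I H a bt br"
    and P: "primal_feasible I \<epsilon> H x y"
  shows "(\<Sum>p\<in>Pk I. a p) - 1 / (2 + \<epsilon>) * ((\<Sum>t\<in>Trn I. \<Sum>\<tau>\<in>{1..H}. bt t \<tau>) + (\<Sum>r\<in>Rcv I. \<Sum>\<tau>\<in>{1..H}. br r \<tau>))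
         \<le> primal_obj I H x y"
proof -
  have fP: "finite (Pk I)" and fT: "finite (Trn I)" and fR: "finite (Rcv I)"
    using V unfolding valid_inst_def by blast+
  have sub: "\<And>p. p \<in> Pk I \<Longrightarrow> Ep I p \<subseteq> Trn I \<times> Rcv I"
  proof -
    have "ER I \<subseteq> Trn I \<times> Rcv I" using V unfolding valid_inst_def by blast
    then show "\<And>p. p \<in> Pk I \<Longrightarrow> Ep I p \<subseteq> Trn I \<times> Rcv I" unfolding Ep_def by blast
  qed
  have r1: "\<And>p. p \<in> Pk I \<Longrightarrow> rl I p \<ge> 1" using V unfolding valid_inst_def by blast
  have fE: "\<And>p. p \<in> Pk I \<Longrightarrow> finite (Ep I p)"
    using sub fT fR by (meson finite_SigmaI rev_finite_subset)
  have PiLsub: "PiL I \<subseteq> Pk I" unfolding PiL_def by blast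
  have a0: "\<And>p. p \<in> Pk I \<Longrightarrow> a p \<ge> 0" using D unfolding dual_feasible_def by blast
  have bt0: "\<And>t \<tau>. t \<in> Trn I \<Longrightarrow> \<tau> \<in> {1..H} \<Longrightarrow> bt t \<tau> \<ge> 0" using D unfolding dual_feasible_def by blast
  have br0: "\<And>r \<tau>. r \<in> Rcv I \<Longrightarrow> \<tau> \<in> {1..H} \<Longrightarrow> br r \<tau> \<ge> 0" using D unfolding dual_feasible_def by blast
  have dc: "\<And>p e \<tau>. p \<in> Pk I \<Longrightarrow> e \<in> Ep I p \<Longrightarrow> \<tau> \<in> {rl I p..H} \<Longrightarrow>
        a p - real (dE I e) * (bt (fst e) \<tau> + br (snd e) \<tau>) \<le> wt I p * (real \<tau> + real (Delta I e) - real (rl I p))"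
    using D unfolding dual_feasible_def by blast
  have aL: "\<And>p. p \<in> PiL I \<Longrightarrow> a p \<le> wt I p * real (ell I p)" using D unfolding dual_feasible_def by blast
  have x0: "\<And>p e \<tau>. p \<in> Pk I \<Longrightarrow> e \<in> Ep I p \<Longrightarrow> \<tau> \<in> {rl I p..H} \<Longrightarrow> x p e \<tau> \<ge> 0"
    using P unfolding primal_feasible_def by blast
  have y0: "\<And>p. p \<in> PiL I \<Longrightarrow> y p \<ge> 0" using P unfolding primal_feasible_def by blast
  have cL: "\<And>p. p \<in> PiL I \<Longrightarrow> (\<Sum>e\<in>Ep I p. \<Sum>\<tau>\<in>{rl I p..H}. x p e \<tau>) + y p \<ge> 1"
    using P unfolding primal_feasible_def by blast
  have cN: "\<And>p. p \<in> Pk I - PiL I \<Longrightarrow> (\<Sum>e\<in>Ep I p. \<Sum>\<tau>\<in>{rl I p..H}. x p e \<tau>) \<ge> 1"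
    using P unfolding primal_feasible_def by blast
  have capT: "\<And>\<tau> t. \<tau> \<le> H \<Longrightarrow> t \<in> Trn I \<Longrightarrow>
        (\<Sum>r\<in>Rcv I. \<Sum>p\<in>{p \<in> Pk I. rl I p \<le> \<tau> \<and> (t, r) \<in> Ep I p}. real (dl I t r) * x p (t, r) \<tau>) \<le> 1 / (2 + \<epsilon>)"
    using P unfolding primal_feasible_def by blast
  have capR: "\<And>\<tau> r. \<tau> \<le> H \<Longrightarrow> r \<in> Rcv I \<Longrightarrow>
        (\<Sum>t\<in>Trn I. \<Sum>p\<in>{p \<in> Pk I. rl I p \<le> \<tau> \<and> (t, r) \<in> Ep I p}. real (dl I t r) * x p (t, r) \<tau>) \<le> 1 / (2 + \<epsilon>)"
    using P unfolding primal_feasible_def by blast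
  define X where "X p = (\<Sum>e\<in>Ep I p. \<Sum>\<tau>\<in>{rl I p..H}. x p e \<tau>)" for p
  define ST where "ST = (\<Sum>p\<in>Pk I. \<Sum>e\<in>Ep I p. \<Sum>\<tau>\<in>{rl I p..H}. real (dE I e) * bt (fst e) \<tau> * x p e \<tau>)"
  define SR where "SR = (\<Sum>p\<in>Pk I. \<Sum>e\<in>Ep I p. \<Sum>\<tau>\<in>{rl I p..H}. real (dE I e) * br (snd e) \<tau> * x p e \<tau>)"
  have obj1: "(\<Sum>p\<in>Pk I. \<Sum>e\<in>Ep I p. \<Sum>\<tau>\<in>{rl I p..H}.
        wt I p * x p e \<tau> * (real \<tau> + real (Delta I e) - real (rl I p)))
      \<ge> (\<Sum>p\<in>Pk I. \<Sum>e\<in>Ep I p. \<Sum>\<tau>\<in>{rl I p..H}.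
        a p * x p e \<tau> - real (dE I e) * bt (fst e) \<tau> * x p e \<tau> - real (dE I e) * br (snd e) \<tau> * x p e \<tau>)"
  proof (intro sum_mono)
    fix p e \<tau> assume h: "p \<in> Pk I" "e \<in> Ep I p" "\<tau> \<in> {rl I p..H}"
    have "(a p - real (dE I e) * (bt (fst e) \<tau> + br (snd e) \<tau>)) * x p e \<tau>
        \<le> wt I p * (real \<tau> + real (Delta I e) - real (rl I p)) * x p e \<tau>"
      by (rule mult_right_mono[OF dc[OF h] x0[OF h]])
    then show "a p * x p e \<tau> - real (dE I e) * bt (fst e) \<tau> * x p e \<tau> - real (dE I e) * br (snd e) \<tau> * x p e \<tau>
        \<le> wt I p * x p e \<tau> * (real \<tau> + real (Delta I e) - real (rl I p))"
      by (simp add: algebra_simps)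
  qed
  have split3: "(\<Sum>p\<in>Pk I. \<Sum>e\<in>Ep I p. \<Sum>\<tau>\<in>{rl I p..H}.
        a p * x p e \<tau> - real (dE I e) * bt (fst e) \<tau> * x p e \<tau> - real (dE I e) * br (snd e) \<tau> * x p e \<tau>)
      = (\<Sum>p\<in>Pk I. a p * X p) - ST - SR"
    unfolding X_def ST_def SR_def by (simp add: sum_subtractf sum_distrib_left)
  have obj2: "(\<Sum>p\<in>PiL I. wt I p * real (ell I p) * y p) \<ge> (\<Sum>p\<in>PiL I. a p * y p)"
    by (intro sum_mono mult_right_mono aL y0)
  have cover: "(\<Sum>p\<in>Pk I. a p * X p) + (\<Sum>p\<in>PiL I. a p * y p) \<ge> (\<Sum>p\<in>Pk I. a p)"
  proof -
    have fL: "finite (PiL I)" using fP PiLsub finite_subset by blast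
    have "(\<Sum>p\<in>Pk I. a p * X p) = (\<Sum>p\<in>PiL I. a p * X p) + (\<Sum>p\<in>Pk I - PiL I. a p * X p)"
      using sum.subset_diff[OF PiLsub fP] by (simp add: add.commute)
    moreover have "(\<Sum>p\<in>Pk I. a p) = (\<Sum>p\<in>PiL I. a p) + (\<Sum>p\<in>Pk I - PiL I. a p)"
      using sum.subset_diff[OF PiLsub fP] by (simp add: add.commute)
    moreover have "(\<Sum>p\<in>PiL I. a p) \<le> (\<Sum>p\<in>PiL I. a p * (X p + y p))"
    proof (intro sum_mono)
      fix p assume "p \<in> PiL I"
      then show "a p \<le> a p * (X p + y p)"
        using cL[of p] a0[of p] PiLsub unfolding X_def
        by (metis mult.right_neutral mult_left_mono subsetD)
    qed
    moreover have "(\<Sum>p\<in>Pk I - PiL I. a p) \<le> (\<Sum>p\<in>Pk I - PiL I. a p * X p)"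
    proof (intro sum_mono)
      fix p assume "p \<in> Pk I - PiL I"
      then show "a p \<le> a p * X p"
        using cN[of p] a0[of p] unfolding X_def
        by (metis DiffD1 mult.right_neutral mult_left_mono)
    qed
    moreover have "(\<Sum>p\<in>PiL I. a p * (X p + y p)) = (\<Sum>p\<in>PiL I. a p * X p) + (\<Sum>p\<in>PiL I. a p * y p)"
      by (simp add: distrib_left sum.distrib)
    ultimately show ?thesis by linarith
  qed
  have STb: "ST \<le> 1 / (2 + \<epsilon>) * (\<Sum>t\<in>Trn I. \<Sum>\<tau>\<in>{1..H}. bt t \<tau>)"
  proof -
    have "ST = (\<Sum>\<tau>\<in>{1..H}. \<Sum>t\<in>Trn I. \<Sum>r\<in>Rcv I. \<Sum>p\<in>{p\<in>Pk I. rl I p \<le> \<tau> \<and> (t,r) \<in> Ep I p}.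
                 real (dl I t r) * bt t \<tau> * x p (t,r) \<tau>)"
      unfolding ST_def dE_def
      using exch[OF fP fT fR sub r1, where F="\<lambda>p t r \<tau>. real (dl I t r) * bt t \<tau> * x p (t,r) \<tau>" and H=H]
      by simp
    also have "\<dots> = (\<Sum>\<tau>\<in>{1..H}. \<Sum>t\<in>Trn I. bt t \<tau> * (\<Sum>r\<in>Rcv I. \<Sum>p\<in>{p\<in>Pk I. rl I p \<le> \<tau> \<and> (t,r) \<in> Ep I p}.
                 real (dl I t r) * x p (t,r) \<tau>))"
      by (simp add: sum_distrib_left mult_ac)
    also have "\<dots> \<le> (\<Sum>\<tau>\<in>{1..H}. \<Sum>t\<in>Trn I. bt t \<tau> * (1 / (2 + \<epsilon>)))"
      by (intro sum_mono mult_left_mono capT bt0) auto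
    also have "\<dots> = 1 / (2 + \<epsilon>) * (\<Sum>t\<in>Trn I. \<Sum>\<tau>\<in>{1..H}. bt t \<tau>)"
      by (subst sum.swap) (simp add: sum_distrib_left mult.commute sum_divide_distrib)
    finally show ?thesis .
  qed
  have SRb: "SR \<le> 1 / (2 + \<epsilon>) * (\<Sum>r\<in>Rcv I. \<Sum>\<tau>\<in>{1..H}. br r \<tau>)"
  proof -
    have "SR = (\<Sum>\<tau>\<in>{1..H}. \<Sum>t\<in>Trn I. \<Sum>r\<in>Rcv I. \<Sum>p\<in>{p\<in>Pk I. rl I p \<le> \<tau> \<and> (t,r) \<in> Ep I p}.
                 real (dl I t r) * br r \<tau> * x p (t,r) \<tau>)"
      unfolding SR_def dE_def
      using exch[OF fP fT fR sub r1, where F="\<lambda>p t r \<tau>. real (dl I t r) * br r \<tau> * x p (t,r) \<tau>" and H=H]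
      by simp
    also have "\<dots> = (\<Sum>\<tau>\<in>{1..H}. \<Sum>r\<in>Rcv I. \<Sum>t\<in>Trn I. \<Sum>p\<in>{p\<in>Pk I. rl I p \<le> \<tau> \<and> (t,r) \<in> Ep I p}.
                 real (dl I t r) * br r \<tau> * x p (t,r) \<tau>)"
      by (simp add: sum.swap[of _ "Trn I"])
    also have "\<dots> = (\<Sum>\<tau>\<in>{1..H}. \<Sum>r\<in>Rcv I. br r \<tau> * (\<Sum>t\<in>Trn I. \<Sum>p\<in>{p\<in>Pk I. rl I p \<le> \<tau> \<and> (t,r) \<in> Ep I p}.
                 real (dl I t r) * x p (t,r) \<tau>))"
      by (simp add: sum_distrib_left mult_ac)
    also have "\<dots> \<le> (\<Sum>\<tau>\<in>{1..H}. \<Sum>r\<in>Rcv I. br r \<tau> * (1 / (2 + \<epsilon>)))"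
      by (intro sum_mono mult_left_mono capR br0) auto
    also have "\<dots> = 1 / (2 + \<epsilon>) * (\<Sum>r\<in>Rcv I. \<Sum>\<tau>\<in>{1..H}. br r \<tau>)"
      by (subst sum.swap) (simp add: sum_distrib_left mult.commute sum_divide_distrib)
    finally show ?thesis .
  qed
  show ?thesis
    unfolding primal_obj_def using obj1 split3 obj2 cover STb SRb
      distrib_left[of "1 / (2 + \<epsilon>)" "\<Sum>t\<in>Trn I. \<Sum>\<tau>\<in>{1..H}. bt t \<tau>" "\<Sum>r\<in>Rcv I. \<Sum>\<tau>\<in>{1..H}. br r \<tau>"]
    by linarith
qed


lemma greedy_indep:
  assumes "\<forall>a\<in>M. \<forall>b\<in>M. a \<noteq> b \<longrightarrow> \<not> adj a b" and "\<And>a b. adj a b = adj b a"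
  shows "\<forall>a\<in>greedy_aux adj M L. \<forall>b\<in>greedy_aux adj M L. a \<noteq> b \<longrightarrow> \<not> adj a b"
  using assms(1)
proof (induction L arbitrary: M)
  case Nil
  then show ?case by simp
next
  case (Cons c cs)
  show ?case
  proof (cases "\<forall>c'\<in>M. \<not> adj c' c")
    case True
    have "\<forall>a\<in>insert c M. \<forall>b\<in>insert c M. a \<noteq> b \<longrightarrow> \<not> adj a b"
      using Cons.prems True assms(2) by blast
    from Cons.IH[OF this] True show ?thesis by simp
  next
    case False
    from Cons.IH[OF Cons.prems] False show ?thesis by (simp del: bex_simps) blast
  qed
qed

lemma adjacent_sym: "adjacent a b = adjacent b a"
  unfolding adjacent_def by auto

lemma tx_indep:
  assumes R: "alg_run I A" and c: "c \<in> chunks I A" and c': "c' \<in> chunks I A"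
    and eq: "tx A c = tx A c'" and ge: "tx A c \<ge> 1" and ne: "c \<noteq> c'"
  shows "\<not> adjacent (cedge A c) (cedge A c')"
proof -
  define \<tau> where "\<tau> = tx A c"
  have rlc: "\<forall>c\<in>chunks I A. rl I (fst c) \<le> tx A c" using R unfolding alg_run_def by blast
  have "\<forall>\<tau>\<ge>1. \<exists>L. distinct L \<and> set L = pending I A \<tau> \<and> sorted_wrt (scan_before I A) L \<and>
        {c \<in> pending I A \<tau>. tx A c = \<tau>} =
          greedy_aux (\<lambda>c' c. adjacent (cedge A c') (cedge A c)) {} L"
    using R unfolding alg_run_def by blast
  then obtain L where L: "{c \<in> pending I A \<tau>. tx A c = \<tau>} =
          greedy_aux (\<lambda>c' c. adjacent (cedge A c') (cedge A c)) {} L"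
    using ge \<tau>_def by blast
  have "c \<in> {c \<in> pending I A \<tau>. tx A c = \<tau>}" "c' \<in> {c \<in> pending I A \<tau>. tx A c = \<tau>}"
    using c c' rlc eq unfolding \<tau>_def pending_def by auto
  moreover have "\<forall>a\<in>greedy_aux (\<lambda>c' c. adjacent (cedge A c') (cedge A c)) {} L.
      \<forall>b\<in>greedy_aux (\<lambda>c' c. adjacent (cedge A c') (cedge A c)) {} L. a \<noteq> b \<longrightarrow> \<not> adjacent (cedge A a) (cedge A b)"
    by (rule greedy_indep) (auto simp: adjacent_sym)
  ultimately show ?thesis using L ne by auto
qed

lemma chunks_finite:
  assumes V: "valid_inst I" shows "finite (chunks I A)"
proof -
  have "finite (Pk I)" using V unfolding valid_inst_def by blast
  then have "finite (SIGMA p:Pk I. {..<dE I (edg A p)})" by (intro finite_SigmaI) auto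
  moreover have "chunks I A \<subseteq> (SIGMA p:Pk I. {..<dE I (edg A p)})"
    unfolding chunks_def by auto
  ultimately show ?thesis by (rule finite_subset[rotated])
qed

lemma card_stepT:
  assumes V: "valid_inst I" and R: "alg_run I A" and ge: "\<tau>' \<ge> 1"
  shows "card {c\<in>chunks I A. tx A c = \<tau>' \<and> fst (cedge A c) = t} \<le> 1"
proof -
  have f: "finite {c\<in>chunks I A. tx A c = \<tau>' \<and> fst (cedge A c) = t}"
    using chunks_finite[OF V] by auto
  have "\<forall>a\<in>{c\<in>chunks I A. tx A c = \<tau>' \<and> fst (cedge A c) = t}.
        \<forall>b\<in>{c\<in>chunks I A. tx A c = \<tau>' \<and> fst (cedge A c) = t}. a = b"
  proof (intro ballI)
    fix a b assume a: "a \<in> {c\<in>chunks I A. tx A c = \<tau>' \<and> fst (cedge A c) = t}"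
      and b: "b \<in> {c\<in>chunks I A. tx A c = \<tau>' \<and> fst (cedge A c) = t}"
    show "a = b"
    proof (rule ccontr)
      assume "a \<noteq> b"
      then have "\<not> adjacent (cedge A a) (cedge A b)"
        using tx_indep[OF R, of a b] a b ge by auto
      then show False using a b unfolding adjacent_def by auto
    qed
  qed
  then show ?thesis using card_le_Suc0_iff_eq[OF f] by simp
qed

lemma card_stepR:
  assumes V: "valid_inst I" and R: "alg_run I A" and ge: "\<tau>' \<ge> 1"
  shows "card {c\<in>chunks I A. tx A c = \<tau>' \<and> snd (cedge A c) = r} \<le> 1"
proof -
  have f: "finite {c\<in>chunks I A. tx A c = \<tau>' \<and> snd (cedge A c) = r}"
    using chunks_finite[OF V] by auto
  have "\<forall>a\<in>{c\<in>chunks I A. tx A c = \<tau>' \<and> snd (cedge A c) = r}.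
        \<forall>b\<in>{c\<in>chunks I A. tx A c = \<tau>' \<and> snd (cedge A c) = r}. a = b"
  proof (intro ballI)
    fix a b assume a: "a \<in> {c\<in>chunks I A. tx A c = \<tau>' \<and> snd (cedge A c) = r}"
      and b: "b \<in> {c\<in>chunks I A. tx A c = \<tau>' \<and> snd (cedge A c) = r}"
    show "a = b"
    proof (rule ccontr)
      assume "a \<noteq> b"
      then have "\<not> adjacent (cedge A a) (cedge A b)"
        using tx_indep[OF R, of a b] a b ge by auto
      then show False using a b unfolding adjacent_def by auto
    qed
  qed
  then show ?thesis using card_le_Suc0_iff_eq[OF f] by simp
qed

lemma cw_nonneg:
  assumes V: "valid_inst I" and c: "c \<in> chunks I A" shows "cw I A c \<ge> 0"
proof -
  have "fst c \<in> Pk I" using c unfolding chunks_def by auto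
  then have "wt I (fst c) > 0" using V unfolding valid_inst_def by blast
  then show ?thesis unfolding cw_def by simp
qed

lemma rl_prec:
  assumes V: "valid_inst I" and p: "p \<in> Pk I" and q: "q \<in> Pk I" and pr: "prec I q p"
  shows "rl I q \<le> rl I p"
proof (rule ccontr)
  assume "\<not> rl I q \<le> rl I p"
  then have "prec I p q" using V p q unfolding valid_inst_def by auto
  then have "prec I p p" using V p q pr unfolding valid_inst_def by blast
  then show False using V p unfolding valid_inst_def by blast
qed


lemma key_bound:
  assumes V: "valid_inst I" and R: "alg_run I A"
    and p: "p \<in> Pk I" and e: "e \<in> Ep I p" and \<tau>: "rl I p \<le> \<tau>"
  shows "wt I p * real (card (HS I A p e)) + real (dE I e) * (\<Sum>c\<in>LS I A p e. cw I A c)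
     \<le> 2 * wt I p * (real \<tau> - real (rl I p)) + real (dE I e) * (betaT I A (fst e) \<tau> + betaR I A (snd e) \<tau>)"
proof -
  define w where "w = wt I p"
  define d where "d = real (dE I e)"
  define t where "t = fst e"
  define r where "r = snd e"
  define X where "X = AdjS I A p e"
  define Hs where "Hs = HS I A p e"
  define Xa where "Xa = {c\<in>X. active I A c \<tau>}"
  define Xf where "Xf = {c\<in>X. \<not> active I A c \<tau>}"
  define g where "g c = (if c \<in> Hs then w else d * cw I A c)" for c
  have fC: "finite (chunks I A)" by (rule chunks_finite[OF V])
  have w0: "w > 0" using V p unfolding valid_inst_def w_def by blast
  have eER: "e \<in> ER I" using e unfolding Ep_def by auto
  have d1: "d \<ge> 1" using V eER unfolding valid_inst_def d_def by auto
  have XC: "X \<subseteq> chunks I A" unfolding X_def AdjS_def Bset_def by auto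
  have fX: "finite X" using XC fC finite_subset by blast
  have HX: "Hs \<subseteq> X" unfolding Hs_def HS_def X_def by auto
  have LS: "LS I A p e = X - Hs" unfolding LS_def X_def Hs_def by simp
  have Xprop: "c \<in> chunks I A \<and> prec I (fst c) p \<and> tx A c \<ge> rl I p \<and> adjacent (cedge A c) e"
    if "c \<in> X" for c
    using that unfolding X_def AdjS_def Bset_def by auto
  have cw0: "cw I A c \<ge> 0" if "c \<in> X" for c using cw_nonneg[OF V, of c A] XC that by blast
  have rlc: "rl I (fst c) \<le> rl I p" if "c \<in> X" for c
  proof -
    have "fst c \<in> Pk I" using Xprop[OF that] unfolding chunks_def by auto
    then show ?thesis using rl_prec[OF V p] Xprop[OF that] by blast
  qed
  have gw: "g c \<le> w" if "c \<in> X" for c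
  proof (cases "c \<in> Hs")
    case True then show ?thesis unfolding g_def by simp
  next
    case False
    then have "\<not> cw I A c \<ge> w / d" using that unfolding Hs_def HS_def X_def w_def d_def by auto
    then have "cw I A c < w / d" by simp
    then have "d * cw I A c < w" using d1 by (simp add: field_simps)
    then show ?thesis using False unfolding g_def by simp
  qed
  have gd: "g c \<le> d * cw I A c" if "c \<in> X" for c
  proof (cases "c \<in> Hs")
    case True
    then have "cw I A c \<ge> w / d" unfolding Hs_def HS_def w_def d_def by auto
    then have "w \<le> d * cw I A c" using d1 by (simp add: field_simps)
    then show ?thesis using True unfolding g_def by simp
  next
    case False then show ?thesis unfolding g_def by simp
  qed
  have S1: "w * real (card Hs) + d * (\<Sum>c\<in>X - Hs. cw I A c) = (\<Sum>c\<in>X. g c)"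
  proof -
    have "(\<Sum>c\<in>X. g c) = (\<Sum>c\<in>X - Hs. g c) + (\<Sum>c\<in>Hs. g c)"
      by (rule sum.subset_diff[OF HX fX])
    moreover have "(\<Sum>c\<in>Hs. g c) = w * real (card Hs)"
      unfolding g_def by simp
    moreover have "(\<Sum>c\<in>X - Hs. g c) = d * (\<Sum>c\<in>X - Hs. cw I A c)"
      unfolding g_def by (simp add: sum_distrib_left)
    ultimately show ?thesis by simp
  qed
  have S2: "(\<Sum>c\<in>X. g c) = (\<Sum>c\<in>Xa. g c) + (\<Sum>c\<in>Xf. g c)"
  proof -
    have "Xa \<subseteq> X" "X - Xa = Xf" unfolding Xa_def Xf_def by auto
    then show ?thesis using sum.subset_diff[OF \<open>Xa \<subseteq> X\<close> fX, of g] by simp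
  qed
  have S3: "(\<Sum>c\<in>Xf. g c) \<le> w * real (card Xf)"
  proof -
    have "(\<Sum>c\<in>Xf. g c) \<le> (\<Sum>c\<in>Xf. w)" by (rule sum_mono) (use gw in \<open>auto simp: Xf_def\<close>)
    then show ?thesis by (simp add: mult.commute)
  qed
  define TS where "TS \<tau>' = {c\<in>chunks I A. tx A c = \<tau>' \<and> fst (cedge A c) = t}" for \<tau>'
  define RS where "RS \<tau>' = {c\<in>chunks I A. tx A c = \<tau>' \<and> snd (cedge A c) = r}" for \<tau>'
  have S4: "card Xf \<le> 2 * (\<tau> - rl I p)"
  proof -
    have rp1: "rl I p \<ge> 1" using V p unfolding valid_inst_def by blast
    have sub: "Xf \<subseteq> (\<Union>\<tau>'\<in>{rl I p..<\<tau>}. TS \<tau>' \<union> RS \<tau>')"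
    proof
      fix c assume c: "c \<in> Xf"
      then have cX: "c \<in> X" unfolding Xf_def by auto
      have na: "\<not> active I A c \<tau>" using c unfolding Xf_def by auto
      have "rl I (fst c) \<le> \<tau>" using rlc[OF cX] \<tau> by linarith
      then have "fin_time I A c \<le> \<tau>" using na unfolding active_def by auto
      then have lt: "tx A c < \<tau>" unfolding fin_time_def by auto
      have "fst (cedge A c) = t \<or> snd (cedge A c) = r"
        using Xprop[OF cX] unfolding adjacent_def t_def r_def by auto
      then have "c \<in> TS (tx A c) \<union> RS (tx A c)"
        using Xprop[OF cX] unfolding TS_def RS_def by auto
      moreover have "tx A c \<in> {rl I p..<\<tau>}" using Xprop[OF cX] lt by auto
      ultimately show "c \<in> (\<Union>\<tau>'\<in>{rl I p..<\<tau>}. TS \<tau>' \<union> RS \<tau>')" by blast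
    qed
    have fU: "finite (\<Union>\<tau>'\<in>{rl I p..<\<tau>}. TS \<tau>' \<union> RS \<tau>')"
      using fC unfolding TS_def RS_def by auto
    have "card Xf \<le> card (\<Union>\<tau>'\<in>{rl I p..<\<tau>}. TS \<tau>' \<union> RS \<tau>')"
      by (rule card_mono[OF fU sub])
    also have "\<dots> \<le> (\<Sum>\<tau>'\<in>{rl I p..<\<tau>}. card (TS \<tau>' \<union> RS \<tau>'))"
      by (rule card_UN_le) simp
    also have "\<dots> \<le> (\<Sum>\<tau>'\<in>{rl I p..<\<tau>}. 2)"
    proof (rule sum_mono)
      fix \<tau>' assume "\<tau>' \<in> {rl I p..<\<tau>}"
      then have g1: "\<tau>' \<ge> 1" using rp1 by auto
      have "card (TS \<tau>' \<union> RS \<tau>') \<le> card (TS \<tau>') + card (RS \<tau>')" by (rule card_Un_le)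
      also have "\<dots> \<le> 1 + 1"
        using card_stepT[OF V R g1, of t] card_stepR[OF V R g1, of r] unfolding TS_def RS_def
        by linarith
      finally show "card (TS \<tau>' \<union> RS \<tau>') \<le> 2" by simp
    qed
    also have "\<dots> = 2 * (\<tau> - rl I p)" by simp
    finally show ?thesis .
  qed
  define AT where "AT = {c \<in> chunks I A. active I A c \<tau> \<and> fst (cedge A c) = t}"
  define AR where "AR = {c \<in> chunks I A. active I A c \<tau> \<and> snd (cedge A c) = r}"
  have S5: "(\<Sum>c\<in>Xa. g c) \<le> d * (betaT I A t \<tau> + betaR I A r \<tau>)"
  proof -
    have fAT: "finite AT" "finite AR" using fC unfolding AT_def AR_def by auto
    have nn: "cw I A c \<ge> 0" if "c \<in> chunks I A" for c using cw_nonneg[OF V that] .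
    have "(\<Sum>c\<in>Xa. g c) \<le> (\<Sum>c\<in>Xa. d * cw I A c)"
      by (rule sum_mono) (use gd in \<open>auto simp: Xa_def\<close>)
    also have "\<dots> = d * (\<Sum>c\<in>Xa. cw I A c)" by (simp add: sum_distrib_left)
    also have "(\<Sum>c\<in>Xa. cw I A c) \<le> (\<Sum>c\<in>AT \<union> AR. cw I A c)"
    proof (rule sum_mono2)
      show "finite (AT \<union> AR)" using fAT by auto
      show "Xa \<subseteq> AT \<union> AR"
      proof
        fix c assume c: "c \<in> Xa"
        then have cX: "c \<in> X" and ac: "active I A c \<tau>" unfolding Xa_def by auto
        have "fst (cedge A c) = t \<or> snd (cedge A c) = r"
          using Xprop[OF cX] unfolding adjacent_def t_def r_def by auto
        then show "c \<in> AT \<union> AR" using Xprop[OF cX] ac unfolding AT_def AR_def by auto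
      qed
      show "\<And>b. b \<in> AT \<union> AR - Xa \<Longrightarrow> 0 \<le> cw I A b" using nn unfolding AT_def AR_def by auto
    qed
    also have "(\<Sum>c\<in>AT \<union> AR. cw I A c) \<le> (\<Sum>c\<in>AT. cw I A c) + (\<Sum>c\<in>AR. cw I A c)"
    proof -
      have "(\<Sum>c\<in>AT \<inter> AR. cw I A c) \<ge> 0" by (rule sum_nonneg) (use nn in \<open>auto simp: AT_def\<close>)
      then show ?thesis using sum_Un[OF fAT, of "cw I A"] by linarith
    qed
    also have "(\<Sum>c\<in>AT. cw I A c) + (\<Sum>c\<in>AR. cw I A c) = betaT I A t \<tau> + betaR I A r \<tau>"
      unfolding AT_def AR_def betaT_def betaR_def by simp
    finally show ?thesis using d1 by (simp add: mult_left_mono)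
  qed
  have "w * real (card Hs) + d * (\<Sum>c\<in>X - Hs. cw I A c) \<le> w * real (card Xf) + d * (betaT I A t \<tau> + betaR I A r \<tau>)"
    using S1 S2 S3 S5 by linarith
  moreover have "w * real (card Xf) \<le> 2 * w * (real \<tau> - real (rl I p))"
  proof -
    have "real (card Xf) \<le> 2 * (real \<tau> - real (rl I p))" using S4 \<tau> by (simp add: of_nat_diff)
    then show ?thesis using w0 by (simp add: mult_left_mono mult.assoc[symmetric] mult.commute[of w 2] mult_left_mono[of _ _ w, simplified] )
  qed
  ultimately show ?thesis
    unfolding w_def d_def t_def r_def Hs_def using LS by (simp add: Hs_def X_def)
qed


lemma alpha_le_imp:
  assumes R: "alg_run I A" and p: "p \<in> Pk I" and e: "e \<in> Ep I p"
  shows "alpha I A p \<le> imp I A p e"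
proof -
  have h: "edg A p \<in> Ep I p \<and> (\<forall>e\<in>Ep I p. imp I A p (edg A p) \<le> imp I A p e) \<and>
        (fixd A p \<longleftrightarrow> p \<in> PiL I \<and> wt I p * real (ell I p) \<le> imp I A p (edg A p))"
    using R p unfolding alg_run_def by blast
  then have "alpha I A p \<le> imp I A p (edg A p)" unfolding alpha_def by auto
  also have "\<dots> \<le> imp I A p e" using h e by blast
  finally show ?thesis .
qed

lemma imp_nonneg:
  assumes V: "valid_inst I" and p: "p \<in> Pk I"
  shows "imp I A p e \<ge> 0"
proof -
  have w: "wt I p > 0" using V p unfolding valid_inst_def by blast
  have "(\<Sum>c\<in>LS I A p e. cw I A c) \<ge> 0"
    by (rule sum_nonneg) (auto simp: LS_def AdjS_def Bset_def intro: cw_nonneg[OF V])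
  then show ?thesis unfolding imp_def using w by (intro add_nonneg_nonneg mult_nonneg_nonneg) auto
qed

lemma alpha_nonneg:
  assumes V: "valid_inst I" and p: "p \<in> Pk I" shows "alpha I A p \<ge> 0"
proof -
  have w: "wt I p > 0" using V p unfolding valid_inst_def by blast
  then show ?thesis unfolding alpha_def using imp_nonneg[OF V p] by auto
qed

lemma betaT_nonneg: assumes V: "valid_inst I" shows "betaT I A t \<tau> \<ge> 0"
  unfolding betaT_def by (rule sum_nonneg) (auto intro: cw_nonneg[OF V])

lemma betaR_nonneg: assumes V: "valid_inst I" shows "betaR I A r \<tau> \<ge> 0"
  unfolding betaR_def by (rule sum_nonneg) (auto intro: cw_nonneg[OF V])

lemma infsum_betaT:
  assumes V: "valid_inst I"
  shows "(\<Sum>\<tau>\<in>{1..H}. betaT I A t \<tau>) \<le> (\<Sum>\<^sub>\<infinity>\<tau>\<in>{1..}. betaT I A t \<tau>)"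
proof -
  define K where "K = H + (\<Sum>c\<in>chunks I A. fin_time I A c)"
  have fC: "finite (chunks I A)" by (rule chunks_finite[OF V])
  have z: "betaT I A t \<tau> = 0" if "\<tau> > K" for \<tau>
  proof -
    have "{c \<in> chunks I A. active I A c \<tau> \<and> fst (cedge A c) = t} = {}"
    proof (rule ccontr)
      assume "\<not> ?thesis"
      then obtain c where c: "c \<in> chunks I A" "active I A c \<tau>" by auto
      have "fin_time I A c \<le> (\<Sum>c\<in>chunks I A. fin_time I A c)"
        by (rule member_le_sum[OF c(1) _ fC]) simp
      then show False using c(2) that unfolding active_def K_def by auto
    qed
    note E = this
    show ?thesis unfolding betaT_def E by simp
  qed
  have "(\<Sum>\<^sub>\<infinity>\<tau>\<in>{1..}. betaT I A t \<tau>) = (\<Sum>\<^sub>\<infinity>\<tau>\<in>{1..K}. betaT I A t \<tau>)"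
    by (rule infsum_cong_neutral) (auto intro: z)
  also have "\<dots> = (\<Sum>\<tau>\<in>{1..K}. betaT I A t \<tau>)" by simp
  finally have eq: "(\<Sum>\<^sub>\<infinity>\<tau>\<in>{1..}. betaT I A t \<tau>) = (\<Sum>\<tau>\<in>{1..K}. betaT I A t \<tau>)" .
  have "(\<Sum>\<tau>\<in>{1..H}. betaT I A t \<tau>) \<le> (\<Sum>\<tau>\<in>{1..K}. betaT I A t \<tau>)"
    by (rule sum_mono2) (auto simp: K_def intro: betaT_nonneg[OF V])
  then show ?thesis using eq by simp
qed

lemma infsum_betaR:
  assumes V: "valid_inst I"
  shows "(\<Sum>\<tau>\<in>{1..H}. betaR I A r \<tau>) \<le> (\<Sum>\<^sub>\<infinity>\<tau>\<in>{1..}. betaR I A r \<tau>)"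
proof -
  define K where "K = H + (\<Sum>c\<in>chunks I A. fin_time I A c)"
  have fC: "finite (chunks I A)" by (rule chunks_finite[OF V])
  have z: "betaR I A r \<tau> = 0" if "\<tau> > K" for \<tau>
  proof -
    have "{c \<in> chunks I A. active I A c \<tau> \<and> snd (cedge A c) = r} = {}"
    proof (rule ccontr)
      assume "\<not> ?thesis"
      then obtain c where c: "c \<in> chunks I A" "active I A c \<tau>" by auto
      have "fin_time I A c \<le> (\<Sum>c\<in>chunks I A. fin_time I A c)"
        by (rule member_le_sum[OF c(1) _ fC]) simp
      then show False using c(2) that unfolding active_def K_def by auto
    qed
    note E = this
    show ?thesis unfolding betaR_def E by simp
  qed
  have "(\<Sum>\<^sub>\<infinity>\<tau>\<in>{1..}. betaR I A r \<tau>) = (\<Sum>\<^sub>\<infinity>\<tau>\<in>{1..K}. betaR I A r \<tau>)"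
    by (rule infsum_cong_neutral) (auto intro: z)
  also have "\<dots> = (\<Sum>\<tau>\<in>{1..K}. betaR I A r \<tau>)" by simp
  finally have eq: "(\<Sum>\<^sub>\<infinity>\<tau>\<in>{1..}. betaR I A r \<tau>) = (\<Sum>\<tau>\<in>{1..K}. betaR I A r \<tau>)" .
  have "(\<Sum>\<tau>\<in>{1..H}. betaR I A r \<tau>) \<le> (\<Sum>\<tau>\<in>{1..K}. betaR I A r \<tau>)"
    by (rule sum_mono2) (auto simp: K_def intro: betaR_nonneg[OF V])
  then show ?thesis using eq by simp
qed

theorem mainTheorem6:
  fixes I :: "('v, 'p) inst" and A :: "('v, 'p) run" and \<epsilon> :: real and H :: nat
  assumes "valid_inst I"
    and "alg_run I A"
    and "\<epsilon> > 0"
    and "\<forall>p\<in>Pk I. rl I p \<le> H"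
  shows "dual_feasible I H (\<lambda>p. alpha I A p / 2) (\<lambda>t \<tau>. betaT I A t \<tau> / 2) (\<lambda>r \<tau>. betaR I A r \<tau> / 2)
       \<and> ereal (Deps I A \<epsilon>) \<le> 2 * primal_val I \<epsilon> H"
proof -
  note V = assms(1) and R = assms(2)
  have DF: "dual_feasible I H (\<lambda>p. alpha I A p / 2) (\<lambda>t \<tau>. betaT I A t \<tau> / 2) (\<lambda>r \<tau>. betaR I A r \<tau> / 2)"
    unfolding dual_feasible_def
  proof (intro conjI ballI)
    fix p assume "p \<in> Pk I" then show "0 \<le> alpha I A p / 2" using alpha_nonneg[OF V] by simp
  next
    fix t \<tau> show "0 \<le> betaT I A t \<tau> / 2" using betaT_nonneg[OF V] by simp
  next
    fix r \<tau> show "0 \<le> betaR I A r \<tau> / 2" using betaR_nonneg[OF V] by simp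
  next
    fix p assume pL: "p \<in> PiL I"
    then have p: "p \<in> Pk I" unfolding PiL_def by auto
    have h: "(fixd A p \<longleftrightarrow> p \<in> PiL I \<and> wt I p * real (ell I p) \<le> imp I A p (edg A p))"
      using R p unfolding alg_run_def by blast
    have w: "wt I p > 0" using V p unfolding valid_inst_def by blast
    have "alpha I A p \<le> wt I p * real (ell I p)"
      using h pL unfolding alpha_def by auto
    moreover have "wt I p * real (ell I p) \<ge> 0" using w by simp
    ultimately show "alpha I A p / 2 \<le> wt I p * real (ell I p)" by linarith
  next
    fix p e \<tau> assume p: "p \<in> Pk I" and e: "e \<in> Ep I p" and \<tau>: "\<tau> \<in> {rl I p..H}"
    have w: "wt I p > 0" using V p unfolding valid_inst_def by blast
    have eER: "e \<in> ER I" using e unfolding Ep_def by auto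
    have d1: "dE I e \<ge> 1" using V eER unfolding valid_inst_def by auto
    have sd: "sof I (fst e) = sp I p" "dof I (snd e) = dp I p" using e unfolding Ep_def by auto
    define first where "first = real (dl I (sp I p) (fst e)) + (real (dE I e) + 1) / 2 + real (dl I (snd e) (dp I p))"
    have fD: "first \<le> real (Delta I e)"
      using d1 sd unfolding first_def Delta_def dE_def by auto
    have K: "wt I p * real (card (HS I A p e)) + real (dE I e) * (\<Sum>c\<in>LS I A p e. cw I A c)
       \<le> 2 * wt I p * (real \<tau> - real (rl I p)) + real (dE I e) * (betaT I A (fst e) \<tau> + betaR I A (snd e) \<tau>)"
      using key_bound[OF V R p e] \<tau> by auto
    have "alpha I A p \<le> imp I A p e" by (rule alpha_le_imp[OF R p e])
    also have "imp I A p e = wt I p * first + (wt I p * real (card (HS I A p e)) + real (dE I e) * (\<Sum>c\<in>LS I A p e. cw I A c))"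
      unfolding imp_def first_def by simp
    finally have a1: "alpha I A p \<le> wt I p * first + 2 * wt I p * (real \<tau> - real (rl I p)) + real (dE I e) * (betaT I A (fst e) \<tau> + betaR I A (snd e) \<tau>)"
      using K by linarith
    have "wt I p * first \<le> wt I p * real (Delta I e)" using fD w by simp
    moreover have "wt I p * real (Delta I e) \<ge> 0" using w by simp
    moreover have "real \<tau> - real (rl I p) \<ge> 0" using \<tau> by auto
    ultimately have "alpha I A p \<le> 2 * (wt I p * (real \<tau> + real (Delta I e) - real (rl I p)))
        + real (dE I e) * (betaT I A (fst e) \<tau> + betaR I A (snd e) \<tau>)"
      using a1 by (simp add: algebra_simps)
    then show "alpha I A p / 2 - real (dE I e) * (betaT I A (fst e) \<tau> / 2 + betaR I A (snd e) \<tau> / 2)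
          \<le> wt I p * (real \<tau> + real (Delta I e) - real (rl I p))"
      by (simp add: field_simps)
  qed
  define c where "c = 1 / (2 + \<epsilon>)"
  have c0: "c \<ge> 0" using assms(3) unfolding c_def by simp
  have ST: "(\<Sum>t\<in>Trn I. \<Sum>\<tau>\<in>{1..H}. betaT I A t \<tau>) \<le> (\<Sum>t\<in>Trn I. \<Sum>\<^sub>\<infinity>\<tau>\<in>{1..}. betaT I A t \<tau>)"
    by (rule sum_mono) (rule infsum_betaT[OF V])
  have SR: "(\<Sum>r\<in>Rcv I. \<Sum>\<tau>\<in>{1..H}. betaR I A r \<tau>) \<le> (\<Sum>r\<in>Rcv I. \<Sum>\<^sub>\<infinity>\<tau>\<in>{1..}. betaR I A r \<tau>)"
    by (rule sum_mono) (rule infsum_betaR[OF V])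
  have bound: "Deps I A \<epsilon> / 2 \<le> primal_obj I H x y" if P: "primal_feasible I \<epsilon> H x y" for x y
  proof -
    have wd: "(\<Sum>p\<in>Pk I. alpha I A p / 2) - c * ((\<Sum>t\<in>Trn I. \<Sum>\<tau>\<in>{1..H}. betaT I A t \<tau> / 2)
        + (\<Sum>r\<in>Rcv I. \<Sum>\<tau>\<in>{1..H}. betaR I A r \<tau> / 2)) \<le> primal_obj I H x y"
      using weak_duality[OF V assms(3) DF P] unfolding c_def by simp
    have "(\<Sum>p\<in>Pk I. alpha I A p / 2) - c * ((\<Sum>t\<in>Trn I. \<Sum>\<tau>\<in>{1..H}. betaT I A t \<tau> / 2)
        + (\<Sum>r\<in>Rcv I. \<Sum>\<tau>\<in>{1..H}. betaR I A r \<tau> / 2))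
        = ((\<Sum>p\<in>Pk I. alpha I A p) - c * ((\<Sum>t\<in>Trn I. \<Sum>\<tau>\<in>{1..H}. betaT I A t \<tau>)
        + (\<Sum>r\<in>Rcv I. \<Sum>\<tau>\<in>{1..H}. betaR I A r \<tau>))) / 2"
      by (simp add: sum_divide_distrib[symmetric] field_simps)
    moreover have "c * ((\<Sum>t\<in>Trn I. \<Sum>\<tau>\<in>{1..H}. betaT I A t \<tau>) + (\<Sum>r\<in>Rcv I. \<Sum>\<tau>\<in>{1..H}. betaR I A r \<tau>))
        \<le> c * ((\<Sum>t\<in>Trn I. \<Sum>\<^sub>\<infinity>\<tau>\<in>{1..}. betaT I A t \<tau>) + (\<Sum>r\<in>Rcv I. \<Sum>\<^sub>\<infinity>\<tau>\<in>{1..}. betaR I A r \<tau>))"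
      using ST SR c0 by (intro mult_left_mono) auto
    ultimately have "((\<Sum>p\<in>Pk I. alpha I A p) - c * ((\<Sum>t\<in>Trn I. \<Sum>\<tau>\<in>{1..H}. betaT I A t \<tau>)
        + (\<Sum>r\<in>Rcv I. \<Sum>\<tau>\<in>{1..H}. betaR I A r \<tau>))) / 2 \<le> primal_obj I H x y"
      and m: "Deps I A \<epsilon> \<le> (\<Sum>p\<in>Pk I. alpha I A p) - c * ((\<Sum>t\<in>Trn I. \<Sum>\<tau>\<in>{1..H}. betaT I A t \<tau>)
        + (\<Sum>r\<in>Rcv I. \<Sum>\<tau>\<in>{1..H}. betaR I A r \<tau>))"
      using wd unfolding Deps_def c_def by linarith+
    then show ?thesis using divide_right_mono[OF m, of 2] by (meson order.trans zero_le_numeral)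
  qed
  have "ereal (Deps I A \<epsilon> / 2) \<le> primal_val I \<epsilon> H"
    unfolding primal_val_def
    by (rule Inf_greatest) (use bound in auto)
  then have "2 * ereal (Deps I A \<epsilon> / 2) \<le> 2 * primal_val I \<epsilon> H"
    by (rule ereal_mult_left_mono) simp
  moreover have "2 * ereal (Deps I A \<epsilon> / 2) = ereal (Deps I A \<epsilon>)" by simp
  ultimately show ?thesis using DF by simp
qed

end
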